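(* Let $U\in C^{3}(\mathbb{R}^{d})$ be a Morse function with finitely many critical points satisfying the growth conditions in the context, and let $\boldsymbol{\ell}$ be a smooth vector field with $\nabla U\cdot\boldsymbol{\ell}\equiv0$. For $\epsilon>0$ let $\mathscr{L}_{\epsilon}f=-(\nabla U+\boldsymbol{\ell})\cdot\nabla f+\epsilon\Delta f$. Then for every $\epsilon>0$ there exists $r_{0}=r_{0}(\epsilon)>0$ such that $(\mathscr{L}_{\epsilon}U)(\boldsymbol{x})\le-3$ for all $\boldsymbol{x}\notin\mathcal{D}_{r_{0}}(\boldsymbol{0})$, where $\mathcal{D}_{r}(\boldsymbol{0})$ is the open ball of radius $r$ centered at the origin.
   Context: Growth conditions: $\lim_{n\to\infty}\inf_{|\boldsymbol{x}|\ge n}U(\boldsymbol{x})/|\boldsymbol{x}|=\infty$, $\lim_{|\boldsymbol{x}|\to\infty}\frac{\boldsymbol{x}}{|\boldsymbol{x}|}\cdot\nabla U(\boldsymbol{x})=\infty$, $\lim_{|\boldsymbol{x}|\to\infty}\{|\nabla U(\boldsymbol{x})|-2\Delta U(\boldsymbol{x})\}=\infty$. *)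

theory Defs
  imports "HOL-Analysis.Analysis"
begin

definition pd :: "'n::finite \<Rightarrow> (real^'n \<Rightarrow> real) \<Rightarrow> real^'n \<Rightarrow> real" where
  "pd i f x = frechet_derivative f (at x) (axis i 1)"

definition grad :: "(real^'n::finite \<Rightarrow> real) \<Rightarrow> real^'n \<Rightarrow> real^'n" where
  "grad f x = (\<chi> i. pd i f x)"

definition laplacian :: "(real^'n::finite \<Rightarrow> real) \<Rightarrow> real^'n \<Rightarrow> real" where
  "laplacian f x = (\<Sum>i\<in>UNIV. pd i (pd i f) x)"

definition hessian :: "(real^'n::finite \<Rightarrow> real) \<Rightarrow> real^'n \<Rightarrow> real^'n^'n" where
  "hessian f x = (\<chi> i j. pd j (pd i f) x)"

fun Ck :: "nat \<Rightarrow> (real^'n::finite \<Rightarrow> real) \<Rightarrow> bool" where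
  "Ck 0 f = continuous_on UNIV f"
| "Ck (Suc k) f = (continuous_on UNIV f \<and> (\<forall>x. f differentiable (at x)) \<and> (\<forall>i. Ck k (pd i f)))"

definition smooth_field :: "(real^'n::finite \<Rightarrow> real^'n) \<Rightarrow> bool" where
  "smooth_field l = (\<forall>k j. Ck k (\<lambda>x. l x $ j))"

definition critical_points :: "(real^'n::finite \<Rightarrow> real) \<Rightarrow> (real^'n) set" where
  "critical_points f = {x. grad f x = 0}"

definition morse :: "(real^'n::finite \<Rightarrow> real) \<Rightarrow> bool" where
  "morse f = (\<forall>x\<in>critical_points f. det (hessian f x) \<noteq> 0)"

definition gen :: "(real^'n::finite \<Rightarrow> real) \<Rightarrow> (real^'n \<Rightarrow> real^'n) \<Rightarrow> real
    \<Rightarrow> (real^'n \<Rightarrow> real) \<Rightarrow> real^'n \<Rightarrow> real" where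
  "gen U l eps f x = - ((grad U x + l x) \<bullet> grad f x) + eps * laplacian f x"

end

theory Submission
  imports Defs
begin

theorem lemma5p1:
  fixes U :: "real^'n::finite \<Rightarrow> real" and l :: "real^'n \<Rightarrow> real^'n"
  assumes C3: "Ck 3 U"
    and Morse: "morse U"
    and fin: "finite (critical_points U)"
    and grow1: "filterlim (\<lambda>x. U x / norm x) at_top at_infinity"
    and grow2: "filterlim (\<lambda>x. (x /\<^sub>R norm x) \<bullet> grad U x) at_top at_infinity"
    and grow3: "filterlim (\<lambda>x. norm (grad U x) - 2 * laplacian U x) at_top at_infinity"
    and l_smooth: "smooth_field l"
    and orth: "\<And>x. grad U x \<bullet> l x = 0"
  shows "\<forall>eps>0. \<exists>r0>0. \<forall>x. x \<notin> ball 0 r0 \<longrightarrow> gen U l eps U x \<le> -3"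
proof (intro allI impI)
  fix eps :: real assume eps: "eps > 0"
  have e2: "\<forall>\<^sub>F x in at_infinity. (x /\<^sub>R norm x) \<bullet> grad U x \<ge> eps + 4"
    using grow2 unfolding filterlim_at_top by blast
  have e3: "\<forall>\<^sub>F x in at_infinity. norm (grad U x) - 2 * laplacian U x \<ge> 0"
    using grow3 unfolding filterlim_at_top by blast
  have "\<forall>\<^sub>F x in at_infinity. gen U l eps U x \<le> -3"
    using e2 e3
  proof eventually_elim
    case (elim x)
    let ?g = "grad U x"
    have n1: "norm (x /\<^sub>R norm x) \<le> 1"
      by (cases "x = 0") auto
    have "(x /\<^sub>R norm x) \<bullet> ?g \<le> norm (x /\<^sub>R norm x) * norm ?g"
      by (rule norm_cauchy_schwarz)
    also have "\<dots> \<le> norm ?g" using n1 by (simp add: mult_left_le_one_le)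
    finally have g: "norm ?g \<ge> eps + 4" using elim by linarith
    have lap: "eps * laplacian U x \<le> eps * (norm ?g / 2)"
      using elim eps by (intro mult_left_mono) auto
    have "gen U l eps U x = - (norm ?g * norm ?g) + eps * laplacian U x"
      unfolding gen_def by (simp add: inner_add_left orth inner_commute[of "l x"] flip: power2_norm_eq_inner power2_eq_square)
    also have "\<dots> \<le> - (norm ?g) * (norm ?g - eps/2)"
      using lap by (simp add: power2_eq_square algebra_simps)
    also have "\<dots> \<le> -3"
    proof -
      have "1 * 3 \<le> norm ?g * (norm ?g - eps/2)"
        using g eps by (intro mult_mono) auto
      thus ?thesis by simp
    qed
    finally show ?case .
  qed
  then obtain b where b: "\<And>x. norm x \<ge> b \<Longrightarrow> gen U l eps U x \<le> -3"
    unfolding eventually_at_infinity by blast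
  show "\<exists>r0>0. \<forall>x. x \<notin> ball 0 r0 \<longrightarrow> gen U l eps U x \<le> -3"
    by (rule exI[of _ "max b 1"]) (auto intro: b simp: dist_norm)
qed

end
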